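(* For $k\in\mathbb{N}$ let $I_k=[2^{-(k+1)},2^{-k}]$ and let $\Phi_{I_k}$ be the function defined below. Then every nonzero element of $\mathrm{span}\{\Phi_{I_k}:k\in\mathbb{N}\}$ belongs to $C^0([0,1])\setminus AC_0$. In particular, $C^0([0,1])\setminus AC_0$ is lineable and the set $\mathcal{J}$ of Kurzweil integrable functions on $[0,1]$ which are not Lebesgue integrable is lineable.
   Context: Define $\Phi:[0,1]\to\mathbb{R}$ by $\Phi(x)=4x^2\sin\left(\frac{\pi}{4x^2}\right)$ for $x\in(0,1/2]$, $\Phi(x)=-4(1-x)^2\sin\left(\frac{\pi}{4(1-x)^2}\right)$ for $x\in(1/2,1)$, and $\Phi(0)=\Phi(1)=0$. For an interval $I=[a,b]\subset[0,1]$, $\Phi_I(x)=\Phi\left(\frac{x-a}{b-a}\right)$ for $x\in I$ and $\Phi_I(x)=0$ otherwise; $\phi_I=\Phi_I'$ (which exists everywhere). $C^0([0,1])$ denotes the set of (everywhere) differentiable real functions on $[0,1]$, and $AC_0$ the set of absolutely continuous functions $F$ on $[0,1]$ with $F(0)=0$. A subset $S$ of a vector space is lineable if $S\cup\{0\}$ contains an infinite-dimensional vector subspace. Kurzweil integral means the Henstock–Kurzweil integral. *)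

theory Defs
  imports "HOL-Analysis.Analysis"
begin

definition Phi :: "real \<Rightarrow> real" where
  "Phi x = (if 0 < x \<and> x \<le> 1/2 then 4 * x^2 * sin (pi / (4 * x^2))
            else if 1/2 < x \<and> x < 1 then - 4 * (1 - x)^2 * sin (pi / (4 * (1 - x)^2))
            else 0)"

definition PhiI :: "real \<Rightarrow> real \<Rightarrow> real \<Rightarrow> real" where
  "PhiI a b x = (if a \<le> x \<and> x \<le> b then Phi ((x - a) / (b - a)) else 0)"

definition PhiIk :: "nat \<Rightarrow> real \<Rightarrow> real" where
  "PhiIk k = PhiI (1 / 2 ^ (k + 1)) (1 / 2 ^ k)"

definition absolutely_continuous_on :: "real set \<Rightarrow> (real \<Rightarrow> real) \<Rightarrow> bool" where
  "absolutely_continuous_on S F \<longleftrightarrow>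
     (\<forall>e>0. \<exists>d>0. \<forall>(n::nat) (a::nat \<Rightarrow> real) (b::nat \<Rightarrow> real).
        (\<forall>i<n. a i \<le> b i \<and> {a i..b i} \<subseteq> S) \<and>
        (\<forall>i<n. \<forall>j<n. i \<noteq> j \<longrightarrow> b i \<le> a j \<or> b j \<le> a i) \<and>
        (\<Sum>i<n. b i - a i) < d
        \<longrightarrow> (\<Sum>i<n. \<bar>F (b i) - F (a i)\<bar>) < e)"

definition AC0 :: "(real \<Rightarrow> real) set" where
  "AC0 = {F. absolutely_continuous_on {0..1} F \<and> F 0 = 0}"

text \<open>C^0([0,1]): functions differentiable at every point of [0,1] (one-sided at the endpoints)\<close>
definition C0 :: "(real \<Rightarrow> real) set" where
  "C0 = {F. F differentiable_on {0..1}}"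

text \<open>Kurzweil (Henstock-Kurzweil) integrable on [0,1] but not Lebesgue integrable\<close>
definition JJ :: "(real \<Rightarrow> real) set" where
  "JJ = {f. f integrable_on {0..1} \<and> \<not> f absolutely_integrable_on {0..1}}"

definition fsubspace :: "(real \<Rightarrow> real) set \<Rightarrow> bool" where
  "fsubspace W \<longleftrightarrow> (\<lambda>x. 0) \<in> W \<and> (\<forall>f\<in>W. \<forall>g\<in>W. (\<lambda>x. f x + g x) \<in> W) \<and>
     (\<forall>c::real. \<forall>f\<in>W. (\<lambda>x. c * f x) \<in> W)"

definition flin_indep :: "(real \<Rightarrow> real) set \<Rightarrow> bool" where
  "flin_indep B \<longleftrightarrow> (\<forall>F c. finite F \<and> F \<subseteq> B \<and> (\<forall>x. (\<Sum>f\<in>F. c f * f x) = 0)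
       \<longrightarrow> (\<forall>f\<in>F. c f = (0::real)))"

definition lineable :: "(real \<Rightarrow> real) set \<Rightarrow> bool" where
  "lineable S \<longleftrightarrow> (\<exists>W. fsubspace W \<and> W \<subseteq> S \<union> {\<lambda>x. 0} \<and>
       (\<exists>B\<subseteq>W. infinite B \<and> flin_indep B))"

end

theory Submission imports Defs "HOL-Analysis.Harmonic_Numbers" begin

definition g0 :: "real \<Rightarrow> real" where "g0 x = 4 * x^2 * sin (pi / (4 * x^2))"
definition Dg :: "real \<Rightarrow> real" where
  "Dg x = 8 * x * sin (pi / (4 * x^2)) - 2 * pi / x * cos (pi / (4 * x^2))"
definition DPhi :: "real \<Rightarrow> real" where
  "DPhi y = (if 0 < y \<and> y \<le> 1/2 then Dg y else if 1/2 < y \<and> y < 1 then Dg (1 - y) else 0)"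

lemma g0_deriv: assumes "x \<noteq> 0" shows "(g0 has_real_derivative Dg x) (at x)"
proof -
  have "((\<lambda>x. 4 * x^2 * sin (pi / (4 * x^2))) has_real_derivative
     (4 * (2 * x) * sin (pi / (4 * x^2)) + 4 * x^2 * (cos (pi / (4 * x^2)) * (- (pi * (4 * (2*x))) / (4 * x^2)^2)))) (at x)"
    using assms by (intro derivative_eq_intros) (auto simp: power2_eq_square)
  moreover have "(4 * (2 * x) * sin (pi / (4 * x^2)) + 4 * x^2 * (cos (pi / (4 * x^2)) * (- (pi * (4 * (2*x))) / (4 * x^2)^2))) = Dg x"
    using assms unfolding Dg_def by (simp add: field_simps power2_eq_square)
  ultimately show ?thesis unfolding g0_def by simp
qed

lemma Phi_eq: "Phi x = (if 0 < x \<and> x \<le> 1/2 then g0 x else if 1/2 < x \<and> x < 1 then - g0 (1 - x) else 0)"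
  unfolding Phi_def g0_def by simp

lemma Phi_zero: "x \<le> 0 \<or> 1 \<le> x \<Longrightarrow> Phi x = 0"
  unfolding Phi_def by auto

lemma DPhi_zero: "x \<le> 0 \<or> 1 \<le> x \<Longrightarrow> DPhi x = 0"
  unfolding DPhi_def by auto

lemma abs_g0: "\<bar>g0 x\<bar> \<le> 4 * x^2"
proof -
  have "x^2 * \<bar>sin (pi / (4 * x^2))\<bar> \<le> x^2 * 1"
    by (intro mult_left_mono) auto
  then show ?thesis unfolding g0_def by (simp add: abs_mult)
qed

lemma Phi_bound0: "\<bar>Phi y\<bar> \<le> 4 * (y - 0)^2"
proof -
  have "\<bar>g0 (1-y)\<bar> \<le> 4 * y^2" if "1/2 < y" "y < 1"
  proof -
    have "(1-y)^2 \<le> y^2" using that by (intro power_mono) auto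
    then show ?thesis using abs_g0[of "1-y"] by linarith
  qed
  then show ?thesis unfolding Phi_eq using abs_g0[of y] by auto
qed

lemma Phi_bound1: "\<bar>Phi y\<bar> \<le> 4 * (y - 1)^2"
proof -
  have "\<bar>g0 y\<bar> \<le> 4 * (y-1)^2" if "0 < y" "y \<le> 1/2"
  proof -
    have "y^2 \<le> (1-y)^2" using that by (intro power_mono) auto
    then show ?thesis using abs_g0[of "y"] by (simp add: power2_commute)
  qed
  moreover have "\<bar>g0 (1-y)\<bar> \<le> 4 * (y-1)^2" for y using abs_g0[of "1-y"] by (simp add: power2_commute)
  ultimately show ?thesis unfolding Phi_eq by auto
qed

lemma quad_deriv:
  fixes f :: "real \<Rightarrow> real"
  assumes "\<And>y. \<bar>f y\<bar> \<le> C * (y - a)^2" "f a = 0"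
  shows "(f has_real_derivative 0) (at a)"
  unfolding has_field_derivative_iff
proof (rule Lim_null_comparison)
  show "\<forall>\<^sub>F y in at a. norm ((f y - f a) / (y - a)) \<le> C * \<bar>y - a\<bar>"
  proof (intro always_eventually allI)
    fix y
    show "norm ((f y - f a) / (y - a)) \<le> C * \<bar>y - a\<bar>"
    proof (cases "y = a")
      case True then show ?thesis using assms(1)[of a] by simp
    next
      case False
      then have "\<bar>y - a\<bar> > 0" by simp
      then have "\<bar>f y\<bar> / \<bar>y - a\<bar> \<le> C * (y-a)^2 / \<bar>y - a\<bar>"
        using assms(1)[of y] by (intro divide_right_mono) auto
      also have "(y-a)^2 = \<bar>y-a\<bar> * \<bar>y-a\<bar>" by (metis abs_mult_self_eq power2_eq_square)
      also have "C * (\<bar>y-a\<bar> * \<bar>y-a\<bar>) / \<bar>y - a\<bar> = C * \<bar>y - a\<bar>"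
        using \<open>\<bar>y - a\<bar> > 0\<close> by (metis mult.assoc nonzero_mult_div_cancel_right less_irrefl)
      finally show ?thesis using assms(2) by (simp add: abs_divide)
    qed
  qed
  have "((\<lambda>y. C * \<bar>y - a\<bar>) \<longlongrightarrow> C * \<bar>a - a\<bar>) (at a)"
    by (intro tendsto_intros)
  then show "((\<lambda>y. C * \<bar>y - a\<bar>) \<longlongrightarrow> 0) (at a)" by simp
qed


lemma glue:
  fixes f :: "real \<Rightarrow> real"
  assumes "(f has_real_derivative D) (at x within {..x})" "(f has_real_derivative D) (at x within {x..})"
  shows "(f has_real_derivative D) (at x)"
proof -
  have "((\<lambda>y. (f y - f x) / (y - x)) \<longlongrightarrow> D) (at x within ({..x} \<union> {x..}))"
    using assms unfolding has_field_derivative_iff by (simp add: Lim_within_Un)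
  moreover have "{..x} \<union> {x..} = UNIV" by auto
  ultimately show ?thesis unfolding has_field_derivative_iff by simp
qed

lemma g0_half: "g0 (1/2) = 0"
  unfolding g0_def by (simp add: power2_eq_square)

lemma Dg_half: "Dg (1/2) = 4 * pi"
  unfolding Dg_def by (simp add: power2_eq_square)

lemma refl_deriv: assumes "y \<noteq> 1" shows "((\<lambda>x. - g0 (1 - x)) has_real_derivative Dg (1 - y)) (at y)"
proof -
  have "((\<lambda>x. g0 (1 - x)) has_real_derivative Dg (1 - y) * (-1)) (at y)"
    by (rule DERIV_chain2[OF g0_deriv]) (use assms in \<open>auto intro!: derivative_eq_intros\<close>)
  then show ?thesis using DERIV_minus by fastforce
qed

lemma Phi_deriv: "(Phi has_real_derivative DPhi y) (at y)"
proof -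
  consider "y < 0" | "y = 0" | "0 < y \<and> y < 1/2" | "y = 1/2" | "1/2 < y \<and> y < 1" | "y = 1" | "1 < y"
    by linarith
  then show ?thesis
  proof cases
    case 1
    show ?thesis
      by (rule has_field_derivative_transform_within_open[of "\<lambda>_. 0" _ _ "{..<0}"])
         (use 1 in \<open>auto simp: DPhi_zero Phi_zero\<close>)
  next
    case 7
    show ?thesis
      by (rule has_field_derivative_transform_within_open[of "\<lambda>_. 0" _ _ "{1<..}"])
         (use 7 in \<open>auto simp: DPhi_zero Phi_zero\<close>)
  next
    case 2
    show ?thesis using quad_deriv[of Phi 4 0, OF Phi_bound0] 2 by (simp add: DPhi_zero Phi_zero)
  next
    case 6
    show ?thesis using quad_deriv[of Phi 4 1, OF Phi_bound1] 6 by (simp add: DPhi_zero Phi_zero)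
  next
    case 3
    have "DPhi y = Dg y" using 3 unfolding DPhi_def by auto
    moreover have "(Phi has_real_derivative Dg y) (at y)"
      by (rule has_field_derivative_transform_within_open[OF g0_deriv, of y "{0<..<1/2}"])
         (use 3 in \<open>auto simp: Phi_eq\<close>)
    ultimately show ?thesis by simp
  next
    case 5
    have "DPhi y = Dg (1 - y)" using 5 unfolding DPhi_def by auto
    moreover have "(Phi has_real_derivative Dg (1 - y)) (at y)"
      by (rule has_field_derivative_transform_within_open[OF refl_deriv, of y "{1/2<..<1}"])
         (use 5 in \<open>auto simp: Phi_eq\<close>)
    ultimately show ?thesis by simp
  next
    case 4
    have d: "DPhi (1/2) = Dg (1/2)" unfolding DPhi_def by simp
    have L0: "(g0 has_real_derivative Dg (1/2)) (at (1/2) within {..1/2})"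
      using g0_deriv[of "1/2"] by (rule has_field_derivative_at_within) simp
    have L: "(Phi has_real_derivative Dg (1 / 2)) (at (1 / 2) within {..1 / 2})"
    proof (rule has_field_derivative_transform_within[OF L0, of "1/2"])
      fix x :: real assume "x \<in> {..1/2}" "dist x (1/2) < 1/2"
      then have "0 < x" "x \<le> 1/2" by (auto simp: dist_real_def)
      then show "g0 x = Phi x" by (simp add: Phi_eq)
    qed auto
    have R0: "((\<lambda>x. - g0 (1 - x)) has_real_derivative Dg (1 - 1/2)) (at (1/2) within {1/2..})"
      using refl_deriv[of "1/2"] by (rule has_field_derivative_at_within) simp
    have R: "(Phi has_real_derivative Dg (1 - 1/2)) (at (1 / 2) within {1/2..})"
    proof (rule has_field_derivative_transform_within[OF R0, of "1/2"])
      fix x :: real assume "x \<in> {1/2..}" "dist x (1/2) < 1/2"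
      then have "1/2 \<le> x" "x < 1" by (auto simp: dist_real_def)
      then show "- g0 (1 - x) = Phi x"
      proof (cases "x = 1/2")
        case True show ?thesis unfolding True by (simp add: Phi_eq g0_half)
      qed (simp add: Phi_eq)
    qed auto
    have "(Phi has_real_derivative Dg (1 / 2)) (at (1/2))"
      using glue[OF L] R by simp
    then show ?thesis unfolding 4 using d by simp
  qed
qed

lemma PhiIk_eq: "PhiIk k x = Phi (2^(k+1) * x - 1)"
proof -
  have p: "(0::real) < 2^(k+1)" by simp
  have L: "1 / 2 ^ k - 1 / 2 ^ (k + 1) = 1 / (2::real) ^ (k+1)" by (simp add: field_simps)
  have e: "(x - 1 / 2 ^ (k + 1)) / (1 / 2 ^ (k + 1)) = 2^(k+1) * x - (1::real)"
    by (simp add: field_simps)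
  show ?thesis
  proof (cases "1 / 2 ^ (k + 1) \<le> x \<and> x \<le> 1 / (2::real) ^ k")
    case True then show ?thesis unfolding PhiIk_def PhiI_def L e by simp
  next
    case False
    then have "x < 1 / 2 ^ (k + 1) \<or> 1 / 2^k < x" by auto
    then have "2^(k+1) * x - 1 \<le> 0 \<or> 1 \<le> 2^(k+1) * x - (1::real)"
    proof
      assume "x < 1 / 2 ^ (k + 1)" then have "2^(k+1) * x < 1" using p by (simp add: field_simps)
      then show ?thesis by simp
    next
      assume "1 / 2 ^ k < x" then have "2 < 2^(k+1) * x" using p by (simp add: field_simps)
      then show ?thesis by simp
    qed
    moreover have "PhiIk k x = 0" unfolding PhiIk_def PhiI_def by (simp only: False if_False)
    ultimately show ?thesis by (simp add: Phi_zero)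
  qed
qed

definition phik :: "nat \<Rightarrow> real \<Rightarrow> real" where
  "phik k x = 2^(k+1) * DPhi (2^(k+1) * x - 1)"

lemma PhiIk_deriv: "(PhiIk k has_real_derivative phik k x) (at x)"
proof -
  have "((\<lambda>x. Phi (2^(k+1) * x - 1)) has_real_derivative DPhi (2^(k+1) * x - 1) * 2^(k+1)) (at x)"
  proof (rule DERIV_chain2[OF Phi_deriv])
    have "((\<lambda>x. 2^(k+1) * x - 1) has_real_derivative 2^(k+1) * 1 - 0) (at x)"
      by (intro DERIV_diff DERIV_cmult DERIV_ident DERIV_const)
    then show "((\<lambda>x. 2^(k+1) * x - 1) has_real_derivative 2^(k+1)) (at x)" by simp
  qed
  then show ?thesis unfolding phik_def PhiIk_eq[abs_def] by (simp add: mult.commute)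
qed


definition am :: "nat \<Rightarrow> real" where "am m = sqrt (1 / (8 * real m + 2))"
definition bm :: "nat \<Rightarrow> real" where "bm m = sqrt (1 / (8 * real m))"

lemma am_pos: "0 < am m" unfolding am_def by simp

lemma am_sq: "(am m)^2 = 1 / (8 * real m + 2)" unfolding am_def by simp

lemma bm_sq: "(bm m)^2 = 1 / (8 * real m)" unfolding bm_def by simp

lemma am_lt_bm: "m \<ge> 1 \<Longrightarrow> am m < bm m"
  unfolding am_def bm_def by (subst real_sqrt_less_iff) (simp add: frac_less2)

lemma bm_Suc_lt_am: "bm (Suc m) < am m"
  unfolding am_def bm_def by (subst real_sqrt_less_iff) (simp add: frac_less2)

lemma bm_mono: "1 \<le> m \<Longrightarrow> m \<le> m' \<Longrightarrow> bm m' \<le> bm m"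
  unfolding bm_def by (subst real_sqrt_le_iff) (simp add: frac_le)

lemma bm_le_half: "m \<ge> 1 \<Longrightarrow> bm m \<le> 1/2"
proof -
  assume m: "m \<ge> 1"
  have "(bm m)^2 \<le> (1/2)^2" unfolding bm_sq using m by (simp add: field_simps)
  then show ?thesis by (rule power2_le_imp_le) simp
qed

lemma bm_pos: "m \<ge> 1 \<Longrightarrow> 0 < bm m" unfolding bm_def by simp

lemma Phi_am: assumes "m \<ge> 1" shows "Phi (am m) = 2 / (4 * real m + 1)"
proof -
  have h: "am m \<le> 1/2" using am_lt_bm[OF assms] bm_le_half[OF assms] by simp
  have "pi / (4 * (am m)^2) = 2 * real m * pi + pi / 2"
    unfolding am_sq by (simp add: field_simps)
  then have "sin (pi / (4 * (am m)^2)) = 1" by (simp add: sin_add)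
  then have "Phi (am m) = 4 * (am m)^2" using h am_pos[of m] unfolding Phi_def by simp
  also have "\<dots> = 2 / (4 * real m + 1)" unfolding am_sq by (simp add: field_simps)
  finally show ?thesis .
qed

lemma Phi_bm: assumes "m \<ge> 1" shows "Phi (bm m) = 0"
proof -
  have h: "bm m \<le> 1/2" using bm_le_half[OF assms] by simp
  have "pi / (4 * (bm m)^2) = 2 * real m * pi"
    unfolding bm_sq using assms by (simp add: field_simps)
  then have "sin (pi / (4 * (bm m)^2)) = 0" by simp
  then show ?thesis using h bm_pos[OF assms] unfolding Phi_def by simp
qed

definition Xk :: "nat \<Rightarrow> real \<Rightarrow> real" where "Xk k p = (1 + p) / 2^(k+1)"

lemma arg_same: "2^(k+1) * Xk k p - 1 = p"
  unfolding Xk_def by simp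

lemma arg_other: assumes "j \<noteq> k" "0 < p" "p < 1"
  shows "2^(j+1) * Xk k p - 1 \<le> 0 \<or> 1 \<le> 2^(j+1) * Xk k p - (1::real)"
proof (cases "j < k")
  case True
  then obtain d where k: "k = j + Suc d" using less_imp_Suc_add[OF True] by auto
  have "k + 1 = (j+1) + Suc d" using k by simp
  then have pw: "(2::real)^(k+1) = 2^(j+1) * 2^(Suc d)" by (simp only: power_add)
  have e: "2^(j+1) * Xk k p = (1+p) / (2::real)^(Suc d)"
    unfolding Xk_def pw by (simp add: field_simps)
  have "(1::real) \<le> 2^d" by simp
  then have "1 + p \<le> 2 * (2::real)^d" using assms by linarith
  then have "(1+p) / (2::real)^(Suc d) \<le> 1" by (simp add: divide_le_eq)
  then show ?thesis unfolding e by simp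
next
  case False
  then have "k < j" using assms(1) by simp
  then obtain d where k: "j = k + Suc d" using less_imp_Suc_add[OF \<open>k < j\<close>] by auto
  have "j + 1 = (k+1) + Suc d" using k by simp
  then have pw: "(2::real)^(j+1) = 2^(k+1) * 2^(Suc d)" by (simp only: power_add)
  have e: "2^(j+1) * Xk k p = (1+p) * (2::real)^(Suc d)"
    unfolding Xk_def pw by simp
  have "(2::real) \<le> 2^(Suc d)" by simp
  moreover have "0 \<le> 1 + p" using assms by simp
  ultimately have "(1+p) * 2 \<le> (1+p) * (2::real)^(Suc d)"
    by (rule mult_left_mono)
  then have "2 * (1+p) \<le> (1+p) * (2::real)^(Suc d)" by (simp only: mult.commute)
  then show ?thesis unfolding e using assms by simp
qed

lemma Xk_bounds: "0 \<le> p \<Longrightarrow> p \<le> 1 \<Longrightarrow> 0 \<le> Xk k p \<and> Xk k p \<le> 1"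
proof -
  assume p: "0 \<le> p" "p \<le> 1"
  have "(1::real) \<le> 2^k" by simp
  then have "1 + p \<le> 2 * (2::real)^k" using p by linarith
  then have "1 + p \<le> (2::real)^(k+1)" by simp
  then show ?thesis using p unfolding Xk_def by simp
qed

lemma Xk_mono: "p \<le> q \<Longrightarrow> Xk k p \<le> Xk k q"
  unfolding Xk_def by (simp add: divide_right_mono)

lemma Xk_strict: "p < q \<Longrightarrow> Xk k p < Xk k q"
  unfolding Xk_def by (simp add: divide_strict_right_mono)

lemma Xk_diff: "Xk k q - Xk k p = (q - p) / 2^(k+1)"
  unfolding Xk_def by (simp add: field_simps)

lemma sumF_eval:
  fixes u :: "nat \<Rightarrow> real \<Rightarrow> real"
  assumes "k < n" "\<And>j. j \<noteq> k \<Longrightarrow> u j x = 0"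
  shows "(\<Sum>j<n. c j * u j x) = c k * u k x"
proof -
  have "(\<Sum>j<n. c j * u j x) = c k * u k x + (\<Sum>j\<in>{..<n} - {k}. c j * u j x)"
    using assms(1) by (subst sum.remove[of _ k]) auto
  also have "(\<Sum>j\<in>{..<n} - {k}. c j * u j x) = 0"
    using assms(2) by (intro sum.neutral) auto
  finally show ?thesis by simp
qed

lemma F_eval: assumes "k < n" "0 < p" "p < 1"
  shows "(\<Sum>j<n. c j * PhiIk j (Xk k p)) = c k * Phi p"
proof -
  have "(\<Sum>j<n. c j * PhiIk j (Xk k p)) = c k * PhiIk k (Xk k p)"
    by (rule sumF_eval[OF assms(1)]) (use arg_other assms in \<open>auto simp: PhiIk_eq Phi_zero\<close>)
  then show ?thesis by (simp only: PhiIk_eq arg_same)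
qed

lemma f_eval: assumes "k < n" "0 < p" "p < 1"
  shows "(\<Sum>j<n. c j * phik j (Xk k p)) = c k * (2^(k+1) * DPhi p)"
proof -
  have "(\<Sum>j<n. c j * phik j (Xk k p)) = c k * phik k (Xk k p)"
    by (rule sumF_eval[OF assms(1)]) (use arg_other assms in \<open>auto simp: phik_def DPhi_zero\<close>)
  then show ?thesis by (simp only: phik_def arg_same)
qed


lemma bm_lt_one: "m \<ge> 1 \<Longrightarrow> bm m < 1" using bm_le_half by fastforce

lemma am_lt_one: "m \<ge> 1 \<Longrightarrow> am m < 1" using am_lt_bm bm_lt_one by fastforce

lemma bm_nonneg: "0 \<le> bm m" unfolding bm_def by simp

lemma interval_order: assumes "1 \<le> m" "m < m'" shows "bm m' < am m"
proof -
  have "bm m' \<le> bm (Suc m)" using assms by (intro bm_mono) auto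
  then show ?thesis using bm_Suc_lt_am[of m] by simp
qed

lemma exists_bm_small: assumes "d > 0" obtains M where "M \<ge> 1" "bm M < d"
proof -
  define M where "M = nat \<lceil>1 / d^2\<rceil> + 1"
  have M1: "M \<ge> 1" unfolding M_def by simp
  have "real M \<ge> 1 / d^2 + 1" unfolding M_def using real_nat_ceiling_ge[of "1/d^2"] by simp
  then have "real M > 1 / d^2" by simp
  then have "real M * d^2 > 1" using assms by (simp add: field_simps)
  then have "1 / (8 * real M) < d^2" using M1 by (simp add: field_simps)
  then have "bm M < sqrt (d^2)" unfolding bm_def by (subst real_sqrt_less_iff) simp
  then have "bm M < d" using assms by simp
  with M1 show ?thesis by (rule that)
qed

lemma two_pow_ge1: "(1::real) \<le> 2 * 2^k"
proof -
  have "(1::real) \<le> 2^k" by simp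
  then show ?thesis by linarith
qed

lemma notAC:
  assumes kn: "k < n" and ck: "c k \<noteq> 0"
  shows "\<not> absolutely_continuous_on {0..1} (\<lambda>x. \<Sum>j<n. c j * PhiIk j x)"
proof
  let ?F = "\<lambda>x. \<Sum>j<n. c j * PhiIk j x"
  assume ac: "absolutely_continuous_on {0..1} ?F"
  define e where "e = \<bar>c k\<bar> / 5"
  have e: "e > 0" using ck unfolding e_def by simp
  from ac[unfolded absolutely_continuous_on_def, rule_format, OF e]
  obtain d where dH: "d > 0 \<and> (\<forall>(N::nat) a b.
        (\<forall>i<N. a i \<le> b i \<and> {a i..b i} \<subseteq> {0..1}) \<and>
        (\<forall>i<N. \<forall>j<N. i \<noteq> j \<longrightarrow> b i \<le> a j \<or> b j \<le> a i) \<and>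
        (\<Sum>i<N. b i - a i) < d
        \<longrightarrow> (\<Sum>i<N. \<bar>?F (b i) - ?F (a i)\<bar>) < e)" ..
  note d = conjunct1[OF dH] and H = conjunct2[OF dH]
  obtain M where M1: "M \<ge> 1" and Md: "bm M < d" using exists_bm_small[OF d] by blast
  define a where "a i = Xk k (am (M+i))" for i
  define b where "b i = Xk k (bm (M+i))" for i
  have P1: "\<forall>i<M. a i \<le> b i \<and> {a i..b i} \<subseteq> {0..1}"
  proof (intro allI impI conjI)
    fix i assume "i < M"
    have m: "1 \<le> M + i" using M1 by simp
    show "a i \<le> b i" unfolding a_def b_def using am_lt_bm[OF m] by (intro Xk_mono) simp
    have "0 \<le> a i" unfolding a_def using Xk_bounds[of "am (M+i)" k] am_pos[of "M+i"] am_lt_one[OF m] by simp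
    moreover have "b i \<le> 1" unfolding b_def using Xk_bounds[of "bm (M+i)" k] bm_nonneg[of "M+i"] bm_lt_one[OF m] by simp
    ultimately show "{a i..b i} \<subseteq> {0..1}" by auto
  qed
  have ord: "b j \<le> a i" if "i < j" for i j
    unfolding a_def b_def using interval_order[of "M+i" "M+j"] that M1 by (intro Xk_mono) simp
  have P2: "\<forall>i<M. \<forall>j<M. i \<noteq> j \<longrightarrow> b i \<le> a j \<or> b j \<le> a i"
  proof (intro allI impI)
    fix i j assume ij: "i < M" "j < M" "i \<noteq> j"
    show "b i \<le> a j \<or> b j \<le> a i"
    proof (cases "i < j")
      case True then show ?thesis using ord[OF True] by simp
    next
      case False then have "j < i" using ij by simp
      then show ?thesis using ord by simp
    qed
  qed
  have len: "b i - a i \<le> bm (M+i) - bm (M + Suc i)" for i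
  proof -
    have m: "1 \<le> M + i" using M1 by simp
    have "b i - a i = (bm (M+i) - am (M+i)) / 2^(k+1)" unfolding a_def b_def by (rule Xk_diff)
    also have "\<dots> \<le> (bm (M+i) - am (M+i)) / 1"
      using am_lt_bm[OF m] two_pow_ge1[of k] by (intro divide_left_mono) simp_all
    also have "\<dots> = bm (M+i) - am (M+i)" by simp
    also have "\<dots> \<le> bm (M+i) - bm (M + Suc i)" using bm_Suc_lt_am[of "M+i"] by simp
    finally show ?thesis .
  qed
  have "(\<Sum>i<M. b i - a i) \<le> (\<Sum>i<M. bm (M+i) - bm (M + Suc i))"
    by (intro sum_mono len)
  also have "\<dots> = bm (M + 0) - bm (M + M)"
    using sum_lessThan_telescope'[of "\<lambda>i. bm (M+i)" M] by simp
  also have "\<dots> \<le> bm M" using bm_nonneg[of "M+M"] by simp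
  finally have P3: "(\<Sum>i<M. b i - a i) < d" using Md by simp
  have lt: "(\<Sum>i<M. \<bar>?F (b i) - ?F (a i)\<bar>) < e"
    by (rule H[rule_format, of M a b, OF conjI[OF P1 conjI[OF P2 P3]]])
  have tm: "\<bar>c k\<bar> / (4 * real M) \<le> \<bar>?F (b i) - ?F (a i)\<bar>" if "i < M" for i
  proof -
    have m: "1 \<le> M + i" using M1 by simp
    have Fb: "?F (b i) = 0" unfolding b_def
      using F_eval[OF kn, of "bm (M+i)" c] bm_pos[OF m] bm_lt_one[OF m] Phi_bm[OF m] by simp
    have Fa: "?F (a i) = c k * (2 / (4 * real (M+i) + 1))" unfolding a_def
      using F_eval[OF kn, of "am (M+i)" c] am_pos[of "M+i"] am_lt_one[OF m] Phi_am[OF m] by simp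
    have "4 * real (M+i) + 1 \<le> 8 * real M" using that by simp
    then have "1 / (8 * real M) \<le> 1 / (4 * real (M+i) + 1)" by (intro divide_left_mono) simp_all
    then have "2 / (8 * real M) \<le> 2 / (4 * real (M+i) + 1)" by simp
    then have "\<bar>c k\<bar> * (2 / (8 * real M)) \<le> \<bar>c k\<bar> * (2 / (4 * real (M+i) + 1))"
      by (intro mult_left_mono) simp_all
    also have "\<dots> = \<bar>?F (b i) - ?F (a i)\<bar>" unfolding Fa Fb by (simp add: abs_mult)
    finally show ?thesis by simp
  qed
  have "real (card {..<M}) * (\<bar>c k\<bar> / (4 * real M)) \<le> (\<Sum>i<M. \<bar>?F (b i) - ?F (a i)\<bar>)"
    by (rule sum_bounded_below) (use tm in auto)
  moreover have "real (card {..<M}) * (\<bar>c k\<bar> / (4 * real M)) = \<bar>c k\<bar> / 4" using M1 by simp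
  ultimately have "\<bar>c k\<bar> / 4 \<le> (\<Sum>i<M. \<bar>?F (b i) - ?F (a i)\<bar>)" by simp
  with lt show False unfolding e_def using ck by simp
qed



lemma F_deriv: "((\<lambda>x. \<Sum>j<n. c j * PhiIk j x) has_real_derivative (\<Sum>j<n. c j * phik j x)) (at x)"
  by (rule DERIV_sum, rule DERIV_cmult, rule PhiIk_deriv)

lemma F_C0: "(\<lambda>x. \<Sum>j<n. c j * PhiIk j x) \<in> C0"
  unfolding C0_def differentiable_on_def
  by (auto intro!: differentiableI[OF has_field_derivative_imp_has_derivative[OF has_field_derivative_at_within[OF F_deriv]]])

lemma f_integral: assumes "u \<le> v"
  shows "((\<lambda>x. \<Sum>j<n. c j * phik j x) has_integral
           ((\<Sum>j<n. c j * PhiIk j v) - (\<Sum>j<n. c j * PhiIk j u))) {u..v}"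
proof (rule fundamental_theorem_of_calculus[OF assms])
  fix x assume "x \<in> {u..v}"
  show "((\<lambda>x. \<Sum>j<n. c j * PhiIk j x) has_vector_derivative (\<Sum>j<n. c j * phik j x)) (at x within {u..v})"
    using has_field_derivative_at_within[OF F_deriv]
    unfolding has_real_derivative_iff_has_vector_derivative .
qed

lemma f_integrable: "(\<lambda>x. \<Sum>j<n. c j * phik j x) integrable_on {0..1}"
  by (rule has_integral_integrable[OF f_integral]) simp

definition Iv :: "nat \<Rightarrow> nat \<Rightarrow> real set" where "Iv k m = {Xk k (am m)..Xk k (bm m)}"

lemma Iv_ne: "1 \<le> m \<Longrightarrow> Xk k (am m) \<le> Xk k (bm m)"
  using am_lt_bm by (intro Xk_mono) (simp add: less_imp_le)

lemma Iv_sub: "1 \<le> m \<Longrightarrow> Iv k m \<subseteq> {0..1}"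
proof -
  assume m: "1 \<le> m"
  have "0 \<le> Xk k (am m)" using Xk_bounds[of "am m" k] am_pos[of m] am_lt_one[OF m] by simp
  moreover have "Xk k (bm m) \<le> 1" using Xk_bounds[of "bm m" k] bm_nonneg[of m] bm_lt_one[OF m] by simp
  ultimately show ?thesis unfolding Iv_def by auto
qed

lemma Iv_order: "1 \<le> m \<Longrightarrow> m < m' \<Longrightarrow> Xk k (bm m') < Xk k (am m)"
  using interval_order by (intro Xk_strict) auto

lemma Iv_inj: "inj_on (Iv k) {1..N}"
proof (rule inj_onI)
  fix m m' assume m: "m \<in> {1..N}" "m' \<in> {1..N}" and eq: "Iv k m = Iv k m'"
  show "m = m'"
  proof (rule ccontr)
    assume "m \<noteq> m'"
    then consider "m < m'" | "m' < m" by linarith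
    then show False
    proof cases
      case 1
      have "Xk k (bm m) \<in> Iv k m" unfolding Iv_def using Iv_ne[of m k] m by auto
      then have "Xk k (bm m) \<le> Xk k (bm m')" using eq unfolding Iv_def by auto
      moreover have "Xk k (bm m') < Xk k (am m)" using Iv_order[OF _ 1] m by auto
      moreover have "Xk k (am m) \<le> Xk k (bm m)" using Iv_ne[of m k] m by auto
      ultimately show False by simp
    next
      case 2
      have "Xk k (bm m') \<in> Iv k m'" unfolding Iv_def using Iv_ne[of m' k] m by auto
      then have "Xk k (bm m') \<le> Xk k (bm m)" using eq unfolding Iv_def by auto
      moreover have "Xk k (bm m) < Xk k (am m')" using Iv_order[OF _ 2] m by auto
      moreover have "Xk k (am m') \<le> Xk k (bm m')" using Iv_ne[of m' k] m by auto
      ultimately show False by simp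
    qed
  qed
qed

lemma Iv_division: "(Iv k ` {1..N}) division_of \<Union>(Iv k ` {1..N})"
  unfolding division_of_def
proof (intro conjI ballI)
  show "finite (Iv k ` {1..N})" by simp
  fix K assume "K \<in> Iv k ` {1..N}"
  then obtain m where m: "m \<in> {1..N}" "K = Iv k m" by auto
  show "K \<subseteq> \<Union>(Iv k ` {1..N})" using m by auto
  show "K \<noteq> {}" using m Iv_ne[of m k] unfolding Iv_def by auto
  show "\<exists>a b. K = cbox a b" using m unfolding Iv_def box_real(2) by blast
next
  fix K1 K2 assume K: "K1 \<in> Iv k ` {1..N}" "K2 \<in> Iv k ` {1..N}"
  show "K1 \<noteq> K2 \<longrightarrow> interior K1 \<inter> interior K2 = {}"
  proof
    assume ne: "K1 \<noteq> K2"
    obtain m m' where m: "m \<in> {1..N}" "K1 = Iv k m" "m' \<in> {1..N}" "K2 = Iv k m'" using K by auto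
    have "m \<noteq> m'" using ne m by auto
    then consider "m < m'" | "m' < m" by linarith
    then show "interior K1 \<inter> interior K2 = {}"
    proof cases
      case 1 then show ?thesis using Iv_order[OF _ 1, of k] m unfolding Iv_def by auto
    next
      case 2 then show ?thesis using Iv_order[OF _ 2, of k] m unfolding Iv_def by auto
    qed
  qed
qed simp


lemma harm_term: assumes "1 \<le> m" shows "(2 * \<bar>C\<bar> / 5) * inverse (real m) \<le> \<bar>C\<bar> * (2 / (4 * real m + 1))"
proof -
  have "4 * real m + 1 \<le> 5 * real m" using assms by simp
  then have "2 / (5 * real m) \<le> 2 / (4 * real m + 1)" using assms by (intro divide_left_mono) simp_all
  then have "\<bar>C\<bar> * (2 / (5 * real m)) \<le> \<bar>C\<bar> * (2 / (4 * real m + 1))" by (intro mult_left_mono) simp_all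
  moreover have "(2 * \<bar>C\<bar> / 5) * inverse (real m) = \<bar>C\<bar> * (2 / (5 * real m))"
    by (simp add: field_simps)
  ultimately show ?thesis by simp
qed

lemma notAI:
  assumes kn: "k < n" and ck: "c k \<noteq> 0"
  shows "\<not> (\<lambda>x. \<Sum>j<n. c j * phik j x) absolutely_integrable_on {0..1}"
proof
  let ?f = "\<lambda>x. \<Sum>j<n. c j * phik j x"
  let ?F = "\<lambda>x. \<Sum>j<n. c j * PhiIk j x"
  assume ai: "?f absolutely_integrable_on {0..1}"
  define h where "h = (\<lambda>x. if x \<in> {0..1} then ?f x else 0)"
  have "h absolutely_integrable_on UNIV"
    unfolding h_def using absolutely_integrable_restrict_UNIV[of "{0..1}" ?f] ai by simp
  then obtain B where B: "\<forall>d. d division_of (\<Union>d) \<longrightarrow> sum (\<lambda>K. norm (integral K h)) d \<le> B"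
    by (rule absolutely_integrable_bounded_variation)
  have intI: "integral (Iv k m) h = - (c k * (2 / (4 * real m + 1)))" if m: "1 \<le> m" for m
  proof -
    have "integral (Iv k m) h = integral (Iv k m) ?f"
    proof (rule integral_cong)
      fix x assume "x \<in> Iv k m"
      then have "x \<in> {0..1}" using Iv_sub[OF m, of k] by blast
      then show "h x = ?f x" by (simp add: h_def)
    qed
    also have "\<dots> = ?F (Xk k (bm m)) - ?F (Xk k (am m))"
      unfolding Iv_def by (rule integral_unique[OF f_integral[OF Iv_ne[OF m]]])
    also have "?F (Xk k (bm m)) = 0"
      using F_eval[OF kn, of "bm m" c] bm_pos[OF m] bm_lt_one[OF m] Phi_bm[OF m] by simp
    also have "?F (Xk k (am m)) = c k * (2 / (4 * real m + 1))"
      using F_eval[OF kn, of "am m" c] am_pos[of m] am_lt_one[OF m] Phi_am[OF m] by simp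
    finally show ?thesis by simp
  qed
  have bound: "(2 * \<bar>c k\<bar> / 5) * (harm N :: real) \<le> B" for N
  proof -
    have "(\<Sum>K\<in>Iv k ` {1..N}. norm (integral K h)) \<le> B" using B Iv_division by blast
    moreover have "(\<Sum>K\<in>Iv k ` {1..N}. norm (integral K h)) = (\<Sum>m\<in>{1..N}. \<bar>c k\<bar> * (2 / (4 * real m + 1)))"
      by (subst sum.reindex[OF Iv_inj]) (auto intro!: sum.cong simp: intI abs_mult)
    moreover have "(2 * \<bar>c k\<bar> / 5) * (harm N :: real) \<le> (\<Sum>m\<in>{1..N}. \<bar>c k\<bar> * (2 / (4 * real m + 1)))"
      unfolding harm_def sum_distrib_left by (intro sum_mono harm_term) auto
    ultimately show ?thesis by linarith
  qed
  define X where "X = 5 * B / (2 * \<bar>c k\<bar>)"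
  define N where "N = nat \<lceil>exp X\<rceil>"
  have "exp X \<le> real N" unfolding N_def by (rule real_nat_ceiling_ge)
  then have "exp X < real N + 1" by simp
  then have "ln (exp X) < ln (real N + 1)" by (subst ln_less_cancel_iff) auto
  then have "X < ln (real N + 1)" by simp
  also have "\<dots> \<le> harm N" by (rule ln_le_harm)
  finally have "X < harm N" .
  then have "(2 * \<bar>c k\<bar> / 5) * X < (2 * \<bar>c k\<bar> / 5) * harm N" using ck by (intro mult_strict_left_mono) auto
  moreover have "(2 * \<bar>c k\<bar> / 5) * X = B" unfolding X_def using ck by (simp add: field_simps)
  ultimately show False using bound[of N] by linarith
qed



definition Wsp :: "(nat \<Rightarrow> real \<Rightarrow> real) \<Rightarrow> (real \<Rightarrow> real) set" where
  "Wsp u = {g. \<exists>n c. g = (\<lambda>x. \<Sum>k<n. c k * u k x)}"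

lemma sum_pad: "(n1::nat) \<le> n \<Longrightarrow> (\<Sum>k<n. (if k < n1 then c1 k else 0) * v k) = (\<Sum>k<n1. c1 k * (v k :: real))"
proof -
  assume nn: "n1 \<le> n"
  have "(\<Sum>k<n. (if k < n1 then c1 k else 0) * v k) = (\<Sum>k<n1. (if k < n1 then c1 k else 0) * v k)"
  proof (rule sum.mono_neutral_right)
    show "{..<n1} \<subseteq> {..<n}" using nn by auto
  qed auto
  also have "\<dots> = (\<Sum>k<n1. c1 k * v k)" by (intro sum.cong) auto
  finally show ?thesis .
qed

lemma Wsp_subspace: "fsubspace (Wsp u)"
  unfolding fsubspace_def
proof (intro conjI ballI allI)
  show "(\<lambda>x. 0) \<in> Wsp u" unfolding Wsp_def by (rule CollectI, rule exI[of _ 0]) simp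
next
  fix f g assume "f \<in> Wsp u" "g \<in> Wsp u"
  then obtain n1 c1 n2 c2 where f: "f = (\<lambda>x. \<Sum>k<n1. c1 k * u k x)" and g: "g = (\<lambda>x. \<Sum>k<n2. c2 k * u k x)"
    unfolding Wsp_def by blast
  define n where "n = max n1 n2"
  define c where "c k = (if k < n1 then c1 k else 0) + (if k < n2 then c2 k else 0)" for k
  have "(\<lambda>x. f x + g x) = (\<lambda>x. \<Sum>k<n. c k * u k x)"
  proof
    fix x
    have "(\<Sum>k<n. c k * u k x) = (\<Sum>k<n. (if k < n1 then c1 k else 0) * u k x) + (\<Sum>k<n. (if k < n2 then c2 k else 0) * u k x)"
      unfolding c_def by (simp add: distrib_right sum.distrib)
    also have "\<dots> = f x + g x" unfolding f g n_def by (simp add: sum_pad)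
    finally show "f x + g x = (\<Sum>k<n. c k * u k x)" by simp
  qed
  then show "(\<lambda>x. f x + g x) \<in> Wsp u" unfolding Wsp_def by blast
next
  fix a :: real and f assume "f \<in> Wsp u"
  then obtain n c where f: "f = (\<lambda>x. \<Sum>k<n. c k * u k x)" unfolding Wsp_def by blast
  have "(\<lambda>x. a * f x) = (\<lambda>x. \<Sum>k<n. (a * c k) * u k x)"
    unfolding f by (simp add: sum_distrib_left mult.assoc)
  then show "(\<lambda>x. a * f x) \<in> Wsp u" unfolding Wsp_def mem_Collect_eq by (intro exI)
qed

lemma range_Wsp: "range u \<subseteq> Wsp u"
proof
  fix g assume "g \<in> range u"
  then obtain k where g: "g = u k" by auto
  have "g = (\<lambda>x. \<Sum>j<Suc k. (if j = k then 1 else 0) * u j x)"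
    unfolding g by (simp add: if_distrib cong: if_cong)
  then show "g \<in> Wsp u" unfolding Wsp_def mem_Collect_eq by (intro exI)
qed

lemma family_props:
  fixes u :: "nat \<Rightarrow> real \<Rightarrow> real" and p :: "nat \<Rightarrow> real"
  assumes nz: "\<And>k. u k (p k) \<noteq> 0" and z: "\<And>j k. j \<noteq> k \<Longrightarrow> u j (p k) = 0"
  shows "infinite (range u)" "flin_indep (range u)"
proof -
  have inj: "inj u"
  proof (rule injI)
    fix j k assume "u j = u k"
    then show "j = k" using nz[of k] z[of j k] by (metis)
  qed
  show "infinite (range u)" using finite_imageD[of u UNIV] inj by auto
  show "flin_indep (range u)"
    unfolding flin_indep_def
  proof (intro allI impI ballI)
    fix F c f
    assume H: "finite F \<and> F \<subseteq> range u \<and> (\<forall>x. (\<Sum>f\<in>F. c f * f x) = 0)" and f: "f \<in> F"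
    obtain k where fk: "f = u k" using H f by auto
    have "(\<Sum>g\<in>F. c g * g (p k)) = c f * f (p k) + (\<Sum>g\<in>F - {f}. c g * g (p k))"
      using H f by (subst sum.remove[of _ f]) auto
    also have "(\<Sum>g\<in>F - {f}. c g * g (p k)) = 0"
    proof (rule sum.neutral, rule ballI)
      fix g assume g: "g \<in> F - {f}"
      then obtain j where gj: "g = u j" using H by auto
      have "j \<noteq> k" using g gj fk by auto
      then show "c g * g (p k) = 0" using z gj by simp
    qed
    finally have "c f * f (p k) = 0" using H by simp
    then show "c f = 0" using nz[of k] fk by simp
  qed
qed

lemma lineable_from_family:
  fixes u :: "nat \<Rightarrow> real \<Rightarrow> real" and p :: "nat \<Rightarrow> real"
  assumes nz: "\<And>k. u k (p k) \<noteq> 0" and z: "\<And>j k. j \<noteq> k \<Longrightarrow> u j (p k) = 0"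
    and mem: "\<And>n c k. k < n \<Longrightarrow> c k \<noteq> 0 \<Longrightarrow> (\<lambda>x. \<Sum>j<n. c j * u j x) \<in> S"
  shows "lineable S"
  unfolding lineable_def
proof (intro exI conjI)
  show "fsubspace (Wsp u)" by (rule Wsp_subspace)
  show "Wsp u \<subseteq> S \<union> {\<lambda>x. 0}"
  proof
    fix g assume "g \<in> Wsp u"
    then obtain n c where g: "g = (\<lambda>x. \<Sum>k<n. c k * u k x)" unfolding Wsp_def by blast
    show "g \<in> S \<union> {\<lambda>x. 0}"
    proof (cases "\<exists>k<n. c k \<noteq> 0")
      case True then show ?thesis using mem g by blast
    next
      case False
      then have "g = (\<lambda>x. 0)" unfolding g by (intro ext sum.neutral) auto
      then show ?thesis by simp
    qed
  qed
  show "range u \<subseteq> Wsp u" by (rule range_Wsp)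
  show "infinite (range u)" "flin_indep (range u)" using family_props[of u p, OF nz z] by auto
qed



lemma nz_coeff:
  assumes "(\<Sum>k<n. c k * (u k x :: real)) \<noteq> 0" obtains k where "k < n" "c k \<noteq> 0"
proof -
  have "\<exists>k<n. c k \<noteq> 0"
  proof (rule ccontr)
    assume "\<not> (\<exists>k<n. c k \<noteq> 0)"
    then have "(\<Sum>k<n. c k * u k x) = 0" by (intro sum.neutral) auto
    with assms show False by simp
  qed
  then show ?thesis using that by blast
qed

lemma am1: "0 < am 1" "am 1 < 1" "Phi (am 1) = 2/5"
  using am_pos[of 1] am_lt_one[of 1] Phi_am[of 1] by auto

lemma DPhi_half: "DPhi (1/2) = 4 * pi"
  unfolding DPhi_def using Dg_half by simp

theorem mainTheorem10:
  shows "(\<forall>(n::nat) (c::nat \<Rightarrow> real).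
            (\<exists>x\<in>{0..1}. (\<Sum>k<n. c k * PhiIk k x) \<noteq> 0) \<longrightarrow>
            (\<lambda>x. \<Sum>k<n. c k * PhiIk k x) \<in> C0 - AC0)
         \<and> lineable (C0 - AC0) \<and> lineable JJ"
proof (intro conjI allI impI)
  have mem1: "(\<lambda>x. \<Sum>j<n. c j * PhiIk j x) \<in> C0 - AC0" if "k < n" "c k \<noteq> 0" for n c k
    using F_C0 notAC[where c=c, OF that] unfolding AC0_def by auto
  fix n :: nat and c :: "nat \<Rightarrow> real"
  assume "\<exists>x\<in>{0..1}. (\<Sum>k<n. c k * PhiIk k x) \<noteq> 0"
  then obtain x where "(\<Sum>k<n. c k * PhiIk k x) \<noteq> 0" by blast
  then obtain k where "k < n" "c k \<noteq> 0" by (rule nz_coeff)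
  then show "(\<lambda>x. \<Sum>k<n. c k * PhiIk k x) \<in> C0 - AC0" by (rule mem1)
next
  have mem1: "(\<lambda>x. \<Sum>j<n. c j * PhiIk j x) \<in> C0 - AC0" if "k < n" "c k \<noteq> 0" for n c k
    using F_C0 notAC[where c=c, OF that] unfolding AC0_def by auto
  show "lineable (C0 - AC0)"
  proof (rule lineable_from_family[of PhiIk "\<lambda>k. Xk k (am 1)"])
    fix k show "PhiIk k (Xk k (am 1)) \<noteq> 0"
      unfolding PhiIk_eq arg_same using am1 by simp
  next
    fix j k :: nat assume "j \<noteq> k"
    then show "PhiIk j (Xk k (am 1)) = 0"
      unfolding PhiIk_eq using arg_other[of j k "am 1"] am1 Phi_zero by blast
  next
    fix n c k assume "k < (n::nat)" "c k \<noteq> (0::real)"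
    then show "(\<lambda>x. \<Sum>j<n. c j * PhiIk j x) \<in> C0 - AC0" by (rule mem1)
  qed
next
  show "lineable JJ"
  proof (rule lineable_from_family[of phik "\<lambda>k. Xk k (1/2)"])
    fix k show "phik k (Xk k (1/2)) \<noteq> 0"
      unfolding phik_def arg_same DPhi_half by simp
  next
    fix j k :: nat assume "j \<noteq> k"
    then have "DPhi (2^(j+1) * Xk k (1/2) - 1) = 0"
      using arg_other[of j k "1/2"] DPhi_zero by simp
    then show "phik j (Xk k (1/2)) = 0" unfolding phik_def by simp
  next
    fix n c k assume "k < (n::nat)" "c k \<noteq> (0::real)"
    then show "(\<lambda>x. \<Sum>j<n. c j * phik j x) \<in> JJ"
      unfolding JJ_def using f_integrable notAI by blast
  qed
qed


end
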